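(* Let $q$ be a prime power, $k\ge1$, $n=4k$, and $\delta\in\mathbb{F}_{q^n}$. Let $$g(x)=\sum_{i=1}^{k}x^{q^{2(i-1)}+q^{2(i-1)+2k}}.$$ Then for $a\in\mathbb{F}_q$, $a\neq0$, the polynomial $f(x)=g(x^q-x+\delta)+ax$ permutes $\mathbb{F}_{q^n}$ if and only if $\mathrm{Tr}(\delta)\neq a$.
   Context: $\mathrm{Tr}$ denotes the trace function from $\mathbb{F}_{q^n}$ to $\mathbb{F}_q$, $\mathrm{Tr}(x)=x+x^q+\cdots+x^{q^{n-1}}$. A polynomial permutes $\mathbb{F}_{q^n}$ if it induces a bijection of $\mathbb{F}_{q^n}$. *)

theory Defs
  imports Main "HOL-Number_Theory.Prime_Powers"
begin

(* The finite field F_{q^n} is modelled as a finite field type 'a with CARD('a) = q^n.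
   Its subfield F_q is {x. x^q = x}. *)

definition subfield_Fq :: "nat \<Rightarrow> 'a::field set" where
  "subfield_Fq q = {x. x ^ q = x}"

definition trace_ext :: "nat \<Rightarrow> nat \<Rightarrow> 'a::field \<Rightarrow> 'a" where
  "trace_ext q n x = (\<Sum>i<n. x ^ (q ^ i))"

definition g_poly :: "nat \<Rightarrow> nat \<Rightarrow> 'a::field \<Rightarrow> 'a" where
  "g_poly q k x = (\<Sum>i=1..k. x ^ (q ^ (2*(i-1)) + q ^ (2*(i-1) + 2*k)))"

end

theory Submission
  imports Defs "HOL-Number_Theory.Number_Theory" "HOL-Computational_Algebra.Polynomial"
begin

lemma frob_pow_add:
  fixes x y :: "'a::field"
  assumes add: "\<And>x y::'a. (x+y)^q = x^q + y^q"
  shows "(x+y)^(q^j) = x^(q^j) + y^(q^j)"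
proof (induction j arbitrary: x y)
  case 0 then show ?case by simp
next
  case (Suc j)
  have "(x+y)^(q^Suc j) = ((x+y)^q)^(q^j)" by (simp add: power_mult)
  also have "\<dots> = (x^q)^(q^j) + (y^q)^(q^j)" by (simp add: add Suc)
  also have "\<dots> = x^(q^Suc j) + y^(q^Suc j)" by (simp add: power_mult)
  finally show ?case .
qed

lemma frob_pow_diff:
  fixes x y :: "'a::field"
  assumes add: "\<And>x y::'a. (x+y)^q = x^q + y^q"
  shows "(x-y)^(q^j) = x^(q^j) - y^(q^j)"
proof -
  have "((x-y)+y)^(q^j) = (x-y)^(q^j) + y^(q^j)" by (rule frob_pow_add[OF add])
  then show ?thesis by (simp add: algebra_simps)
qed

lemma frob_pow_sum:
  fixes f :: "'b \<Rightarrow> 'a::field"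
  assumes add: "\<And>x y::'a. (x+y)^q = x^q + y^q" and q: "q > 0"
  shows "(\<Sum>i\<in>A. f i)^(q^j) = (\<Sum>i\<in>A. f i ^ (q^j))"
proof (induction A rule: infinite_finite_induct)
  case (infinite A) then show ?case using q by simp
next
  case empty then show ?case using q by simp
next
  case (insert x F) then show ?case by (simp add: frob_pow_add[OF add])
qed

lemma frob_of_nat:
  assumes add: "\<And>x y::'a::field. (x+y)^q = x^q + y^q" and q: "q > 0"
  shows "(of_nat m :: 'a)^q = of_nat m"
proof (induction m)
  case 0 then show ?case using q by simp
next
  case (Suc m) then show ?case using add[of "of_nat m" 1] by (simp add: add.commute)
qed

lemma fixed_pow:
  fixes w :: "'a::field"
  assumes "w^(q^2) = w"
  shows "w^(q^(2*m)) = w"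
proof (induction m)
  case 0 then show ?case by simp
next
  case (Suc m)
  have "w^(q^(2*Suc m)) = (w^(q^2))^(q^(2*m))"
    by (simp add: power_mult[symmetric] power_add[symmetric] mult.commute)
  then show ?case using assms Suc by simp
qed

lemma sum_cyc:
  fixes t :: "nat \<Rightarrow> 'a::comm_monoid_add"
  assumes "k \<ge> 1" "t k = t 0"
  shows "(\<Sum>i<k. t (Suc i)) = (\<Sum>i<k. t i)"
proof -
  obtain m where k: "k = Suc m" using assms(1) by (cases k) auto
  have "(\<Sum>i<k. t (Suc i)) = (\<Sum>i<m. t (Suc i)) + t 0" using assms k by simp
  also have "\<dots> = (\<Sum>i<k. t i)" unfolding k sum.lessThan_Suc_shift by (simp add: add.commute)
  finally show ?thesis .
qed

lemma sum_pairs: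
  fixes t :: "nat \<Rightarrow> 'a::comm_monoid_add"
  shows "(\<Sum>j<2*m. t j) = (\<Sum>i<m. t (2*i) + t (2*i+1))"
  by (induction m) (simp_all add: algebra_simps)

lemma sum_split_add:
  fixes t :: "nat \<Rightarrow> 'a::comm_monoid_add"
  shows "(\<Sum>j<m+m'. t j) = (\<Sum>j<m. t j) + (\<Sum>j<m'. t (m+j))"
  by (induction m') (simp_all add: algebra_simps)

lemma sum_4k:
  fixes t :: "nat \<Rightarrow> 'a::comm_monoid_add"
  shows "(\<Sum>j<4*k. t j) = (\<Sum>i<k. t (2*i) + t (2*i+2*k) + t (2*i+1) + t (2*i+2*k+1))"
proof -
  have "(\<Sum>j<4*k. t j) = (\<Sum>i<2*k. t (2*i) + t (2*i+1))"
    using sum_pairs[of t "2*k"] by simp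
  also have "\<dots> = (\<Sum>i<k. t (2*i) + t (2*i+1)) + (\<Sum>i<k. t (2*(k+i)) + t (2*(k+i)+1))"
    using sum_split_add[of "\<lambda>i. t (2*i) + t (2*i+1)" k k] by (simp add: mult_2)
  also have "\<dots> = (\<Sum>i<k. t (2*i) + t (2*i+2*k) + t (2*i+1) + t (2*i+2*k+1))"
    by (simp add: sum.distrib[symmetric] algebra_simps)
  finally show ?thesis .
qed

lemma root_bound:
  fixes w :: "nat \<Rightarrow> 'a::field"
  assumes q: "q \<ge> 2" and mN: "m < N" and wm: "w m \<noteq> 0" and wz: "\<forall>j. m < j \<and> j < N \<longrightarrow> w j = 0"
  shows "card {x. (\<Sum>j<N. w j * x^(q^j)) = 0} \<le> q^m"
proof -
  define p where "p = (\<Sum>j<N. monom (w j) (q^j))"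
  have ev: "poly p x = (\<Sum>j<N. w j * x^(q^j))" for x by (simp add: p_def poly_sum poly_monom)
  have inj: "(q^i = q^j) = (i = j)" for i j using q by (simp add: power_inject_exp)
  have "coeff p (q^m) = (\<Sum>j<N. if j = m then w j else 0)"
    by (simp add: p_def coeff_sum coeff_monom inj)
  also have "\<dots> = w m" using mN by (simp add: sum.delta)
  finally have cf: "coeff p (q^m) = w m" .
  hence "p \<noteq> 0" using wm by auto
  have "degree p \<le> q^m" unfolding p_def
  proof (rule degree_sum_le)
    fix j assume "j \<in> {..<N}"
    show "degree (monom (w j) (q^j)) \<le> q^m"
    proof (cases "j \<le> m")
      case True
      then have "q^j \<le> q^m" using q by (simp add: power_increasing)
      then show ?thesis using degree_monom_le[of "w j" "q^j"] by linarith
    next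
      case False then show ?thesis using wz \<open>j \<in> {..<N}\<close> by simp
    qed
  qed simp
  with card_poly_roots_bound[OF \<open>p \<noteq> 0\<close>] show ?thesis by (simp add: ev)
qed

lemma count_additive:
  fixes A :: "'a::{ab_group_add,finite} \<Rightarrow> 'b::ab_group_add"
  assumes add: "\<And>x y. A (x+y) = A x + A y"
  shows "card (UNIV::'a set) \<le> card (range A) * card {x. A x = 0}"
proof -
  have A0: "A 0 = 0" using add[of 0 0] by simp
  have Am: "A (x - y) = A x - A y" for x y using add[of "x-y" y] by (simp add: algebra_simps)
  have "card (UNIV::'a set) = card (\<Union>b\<in>range A. {x. A x = b})" by (rule arg_cong[of _ _ card]) auto
  also have "\<dots> \<le> (\<Sum>b\<in>range A. card {x. A x = b})" by (rule card_UN_le) simp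
  also have "\<dots> \<le> (\<Sum>b\<in>range A. card {x. A x = 0})"
  proof (rule sum_mono)
    fix b assume "b \<in> range A"
    then obtain x0 where x0: "A x0 = b" by auto
    have "{x. A x = b} \<subseteq> (\<lambda>z. z + x0) ` {x. A x = 0}"
    proof
      fix x assume "x \<in> {x. A x = b}"
      then have "A (x - x0) = 0" using x0 Am by simp
      then show "x \<in> (\<lambda>z. z + x0) ` {x. A x = 0}" by (intro image_eqI[of _ _ "x - x0"]) auto
    qed
    then have "card {x. A x = b} \<le> card ((\<lambda>z. z + x0) ` {x. A x = 0})" by (intro card_mono) auto
    also have "\<dots> \<le> card {x. A x = 0}" by (rule card_image_le) simp
    finally show "card {x. A x = b} \<le> card {x. A x = 0}" .
  qed
  also have "\<dots> = card (range A) * card {x. A x = 0}" by simp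
  finally show ?thesis .
qed

lemma pp: "((y::'a::field)^(q^j))^(q^i) = y^(q^(j+i))"
  by (simp add: power_mult[symmetric] power_add)

theorem mainTheorem8:
  fixes q k n :: nat and \<delta> a :: "'a::{field,finite}"
  assumes "primepow q"
    and "k \<ge> 1"
    and "n = 4 * k"
    and "card (UNIV :: 'a set) = q ^ n"
    and "a \<in> subfield_Fq q"
    and "a \<noteq> 0"
  shows "bij (\<lambda>x. g_poly q k (x ^ q - x + \<delta>) + a * x) \<longleftrightarrow> trace_ext q n \<delta> \<noteq> a"
proof -
  from assms(1) obtain p r where p: "prime p" "r > 0" "q = p^r" by (auto simp: primepow_def)
  have q2: "q \<ge> 2"
    using p prime_ge_2_nat[of p] by (metis le_trans self_le_power less_imp_le_nat not_numeral_le_zero one_le_numeral)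
  have qpos: "q > 0" using q2 by simp
  have fin: "finite (UNIV::'a set)" by simp
  have charpos: "CHAR('a) > 0" using finite_imp_CHAR_pos[OF fin] .
  have cp: "prime CHAR('a)" by (rule prime_CHAR_semidom[OF charpos])
  have "CHAR('a) dvd p^(r*n)" using CHAR_dvd_CARD[where 'a='a] assms(4) p by (simp add: power_mult)
  then have "CHAR('a) dvd p" using cp prime_dvd_power by blast
  then have cpe: "CHAR('a) = p" using cp p primes_dvd_imp_eq by blast
  have add: "\<And>x y::'a. (x+y)^q = x^q + y^q"
    by (rule freshmans_dream'[OF cp]) (simp add: p cpe)
  have card_pow: "x ^ card (UNIV::'a set) = x" for x :: 'a
  proof (cases "x = 0")
    case False
    have "x * (\<Prod>y\<in>UNIV-{0}. x * y) = x * x ^ (card (UNIV :: 'a set) - 1) * \<Prod>(UNIV-{0})"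
      by (simp add: prod.distrib mult_ac)
    also have "x * x ^ (card (UNIV :: 'a set) - 1) = x ^ Suc (card (UNIV :: 'a set) - 1)"
      by (subst power_Suc) auto
    also have "Suc (card (UNIV :: 'a set) - 1) = card (UNIV :: 'a set)"
      using finite_UNIV_card_ge_0[where ?'a = 'a] by simp
    also have "(\<Prod>y\<in>UNIV-{0}. x * y) = (\<Prod>y\<in>UNIV-{0}. y)"
      by (rule prod.reindex_bij_witness[of _ "\<lambda>y. y / x" "\<lambda>y. x * y"]) (use False in auto)
    finally show ?thesis
      by simp
  qed (use finite_UNIV_card_ge_0[where ?'a = 'a] in auto)
  have fixall: "x^(q^(4*k)) = x" for x :: 'a using card_pow assms(3,4) by simp
  have aq: "a^q = a" using assms(5) by (simp add: subfield_Fq_def)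
  have aqq: "a^(q^2) = a" using aq by (simp add: power2_eq_square power_mult)
  have Kq: "(of_nat k :: 'a)^q = of_nat k" by (rule frob_of_nat[OF add qpos])
  have g_eq: "g_poly q k z = (\<Sum>i<k. z^(q^(2*i)) * z^(q^(2*i+2*k)))" for z :: 'a
    unfolding g_poly_def
    by (rule sum.reindex_bij_witness[of _ Suc "\<lambda>i. i - 1"]) (auto simp: power_add)
  have gfix: "(g_poly q k z)^(q^2) = g_poly q k z" for z :: 'a
  proof -
    define T where "T i = z^(q^(2*i)) * z^(q^(2*i+2*k))" for i
    have "(g_poly q k z)^(q^2) = (\<Sum>i<k. T i ^ (q^2))"
      unfolding g_eq T_def by (rule frob_pow_sum[OF add qpos])
    also have "\<dots> = (\<Sum>i<k. T (Suc i))"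
      by (simp add: T_def power_mult_distrib pp algebra_simps)
    also have "\<dots> = (\<Sum>i<k. T i)"
    proof (rule sum_cyc[OF assms(2)])
      have "2*k+2*k = 4*k" by simp
      then show "T k = T 0" unfolding T_def using fixall[of z] by (simp add: mult.commute)
    qed
    finally show ?thesis unfolding g_eq T_def .
  qed
  define S :: "'a \<Rightarrow> 'a" where "S y = (\<Sum>i<k. y^(q^(2*i)) + y^(q^(2*i+2*k)))" for y
  have Sfix: "(S y)^(q^2) = S y" for y
  proof -
    define T where "T i = y^(q^(2*i)) + y^(q^(2*i+2*k))" for i
    have "(S y)^(q^2) = (\<Sum>i<k. T i ^ (q^2))"
      unfolding S_def T_def by (rule frob_pow_sum[OF add qpos])
    also have "\<dots> = (\<Sum>i<k. T (Suc i))"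
      by (simp add: T_def frob_pow_add[OF add] pp algebra_simps)
    also have "\<dots> = (\<Sum>i<k. T i)"
    proof (rule sum_cyc[OF assms(2)])
      have "2*k+2*k = 4*k" by simp
      then show "T k = T 0" unfolding T_def using fixall[of y] by (simp add: add.commute)
    qed
    finally show ?thesis unfolding S_def T_def .
  qed
  have Sadd: "S (x + y) = S x + S y" for x y
    by (simp add: S_def frob_pow_add[OF add] sum.distrib[symmetric] algebra_simps)
  have Sdiff: "S (x - y) = S x - S y" for x y
    by (simp add: S_def frob_pow_diff[OF add] sum_subtractf[symmetric] algebra_simps)
  have Sq: "(S y)^q = (\<Sum>i<k. y^(q^(2*i+1)) + y^(q^(2*i+2*k+1)))" for y
  proof -
    have "(S y)^(q^1) = (\<Sum>i<k. (y^(q^(2*i)) + y^(q^(2*i+2*k)))^(q^1))"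
      unfolding S_def by (rule frob_pow_sum[OF add qpos])
    also have "\<dots> = (\<Sum>i<k. y^(q^(2*i+1)) + y^(q^(2*i+2*k+1)))"
      by (simp only: frob_pow_add[OF add] pp)
    finally show ?thesis by simp
  qed
  have Sfrob: "S (y^q) = (S y)^q" for y
    unfolding Sq by (simp add: S_def power_mult[symmetric])
  define s where "s = S \<delta>"
  have trace: "trace_ext q n \<delta> = s + s^q"
    unfolding trace_ext_def assms(3) sum_4k s_def Sq unfolding S_def
    by (simp add: sum.distrib[symmetric] algebra_simps)
  define F where "F x = g_poly q k (x ^ q - x + \<delta>) + a * x" for x
  define K where "K = (of_nat k :: 'a)"
  have coll: "F (y + c) = F y + (c^q - c) * ((S y)^q - S y + s) + K * (c^q - c)^2 + a * c"
    if c2: "c^(q^2) = c" for y c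
  proof -
    define e where "e = c^q - c"
    have "e^(q^2) = (c^(q^2))^q - c^(q^2)"
      unfolding e_def frob_pow_diff[OF add] by (simp add: power_mult[symmetric] mult.commute)
    then have e2: "e^(q^2) = e" using c2 e_def by simp
    have ee: "e^(q^(2*m)) = e" for m by (rule fixed_pow[OF e2])
    define z where "z = y^q - y + \<delta>"
    have zc: "(y+c)^q - (y+c) + \<delta> = z + e" unfolding z_def e_def add by simp
    have "g_poly q k (z + e) = (\<Sum>i<k. (z^(q^(2*i)) + e) * (z^(q^(2*i+2*k)) + e))"
      unfolding g_eq frob_pow_add[OF add] using ee[of "_ + k"] ee by (simp add: algebra_simps)
    also have "\<dots> = (\<Sum>i<k. z^(q^(2*i)) * z^(q^(2*i+2*k)) + e * (z^(q^(2*i)) + z^(q^(2*i+2*k))) + e^2)"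
      by (simp add: algebra_simps power2_eq_square)
    also have "\<dots> = g_poly q k z + e * S z + K * e^2"
      by (simp add: g_eq S_def K_def sum.distrib sum_distrib_left[symmetric])
    finally have "g_poly q k (z + e) = g_poly q k z + e * S z + K * e^2" .
    moreover have "S z = (S y)^q - S y + s" unfolding z_def s_def Sadd Sdiff Sfrob ..
    moreover have "F y = g_poly q k z + a*y" by (simp add: F_def z_def)
    moreover have "F (y+c) = g_poly q k (z+e) + a*(y+c)" unfolding F_def zc ..
    ultimately show ?thesis unfolding e_def[symmetric] by (simp add: algebra_simps)
  qed
  have bijF: "bij F \<longleftrightarrow> inj F" using finite_UNIV_inj_surj[OF fin] by (auto simp: bij_def)
  have eq_q: "(w^q)^q = w^(q^2)" for w :: 'a by (simp add: power_mult[symmetric] power2_eq_square)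
  have dir1: "inj F" if ntr: "s + s^q \<noteq> a"
  proof (rule injI)
    fix x y assume Fxy: "F x = F y"
    show "x = y"
    proof (rule ccontr)
      assume "x \<noteq> y"
      define c where "c = x - y"
      have c0: "c \<noteq> 0" using \<open>x \<noteq> y\<close> c_def by simp
      define G where "G w = g_poly q k (w ^ q - w + \<delta>)" for w
      have ac: "a * c = G y - G x" using Fxy unfolding F_def G_def c_def by (simp add: algebra_simps)
      have "(a*c)^(q^2) = a * c^(q^2)" by (simp add: power_mult_distrib aqq)
      also have "(a*c)^(q^2) = a * c" unfolding ac frob_pow_diff[OF add] G_def gfix ..
      finally have c2: "c^(q^2) = c" using assms(6) by simp
      have xc: "x = y + c" using c_def by simp
      define e where "e = c^q - c"
      define u where "u = S y"
      define W where "W = u^q - u + s"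
      have eq1: "e * W + K * e^2 + a * c = 0"
        using coll[OF c2, of y] Fxy xc by (simp add: e_def u_def W_def add.assoc)
      have e0: "e \<noteq> 0"
      proof
        assume "e = 0" then have "a * c = 0" using eq1 by simp
        then show False using c0 assms(6) by simp
      qed
      have sub1: "(v - w)^q = v^q - w^q" for v w :: 'a using frob_pow_diff[OF add, of v w 1] by simp
      have add1: "(v + w)^q = v^q + w^q" for v w :: 'a by (rule add)
      have eq: "e^q = -e" unfolding e_def sub1 eq_q c2 by simp
      have cq: "c^q = c + e" by (simp add: e_def)
      have Wq: "W^q = u - u^q + s^q"
        unfolding W_def add1 sub1 eq_q u_def Sfix ..
      have "(e * W + K * e^2 + a * c)^q = e^q * W^q + K^q * (e^q)^2 + a^q * c^q"
        by (simp add: add power_mult_distrib eq_q power_mult[symmetric] mult.commute)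
      then have eq2: "(-e) * (u - u^q + s^q) + K * e^2 + a * (c + e) = 0"
        using eq1 qpos by (simp add: eq Wq K_def Kq aq cq power_0_left)
      have "e * (s + s^q - a) = (e * W + K * e^2 + a * c) - ((-e) * (u - u^q + s^q) + K * e^2 + a * (c + e))"
        unfolding W_def by (simp add: algebra_simps)
      then have "e * (s + s^q - a) = 0 - 0" unfolding eq1 eq2 .
      then have "e * (s + s^q - a) = 0" by simp
      then show False using e0 ntr by simp
    qed
  qed
  have cardU: "card (UNIV::'a set) = q^(4*k)" using assms(3,4) by simp
  have Spoly: "S y = (\<Sum>j<4*k. (if even j then 1 else 0) * y^(q^j))" for y
    unfolding sum_4k S_def by simp
  have kerS: "card {y. S y = 0} \<le> q^(4*k-2)"
  proof -
    have "card {y. (\<Sum>j<4*k. (if even j then 1 else 0) * y^(q^j)) = (0::'a)} \<le> q^(4*k-2)"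
    proof (rule root_bound[OF q2])
      show "4*k-2 < 4*k" using assms(2) by simp
      have "4*k-2 = 2*(2*k-1)" using assms(2) by simp
      then show "(if even (4*k-2) then 1 else 0) \<noteq> (0::'a)" by simp
      show "\<forall>j. 4*k-2 < j \<and> j < 4*k \<longrightarrow> (if even j then 1 else 0) = (0::'a)"
      proof (intro allI impI)
        fix j assume "4*k-2 < j \<and> j < 4*k"
        then have "j = 2*(2*k-1) + 1" using assms(2) by presburger
        then show "(if even j then 1 else 0) = (0::'a)" by simp
      qed
    qed
    then show ?thesis unfolding Spoly .
  qed
  have cS: "q^2 \<le> card (range S)"
  proof -
    have "q^(4*k) \<le> card (range S) * card {y. S y = 0}"
      using count_additive[of S] Sadd cardU by simp
    also have "\<dots> \<le> card (range S) * q^(4*k-2)" using kerS by simp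
    finally have h1: "q^(4*k) \<le> card (range S) * q^(4*k-2)" .
    moreover have "q^(4*k) = q^2 * q^(4*k-2)"
    proof -
      have "4*k = 2 + (4*k-2)" using assms(2) by simp
      then show ?thesis by (metis power_add)
    qed
    ultimately have "q^2 * q^(4*k-2) \<le> card (range S) * q^(4*k-2)" by simp
    then show ?thesis using qpos mult_le_cancel2[of "q^2" "q^(4*k-2)" "card (range S)"] by simp
  qed
  have cFq: "card {x::'a. x^q = x} \<le> q"
  proof -
    have "card {x. (\<Sum>j<2. (if j = 0 then -1 else 1) * x^(q^j)) = (0::'a)} \<le> q^1"
      by (rule root_bound[OF q2]) auto
    moreover have "(\<Sum>j<2. (if j = 0 then -1 else 1) * x^(q^j)) = x^q - x" for x :: 'a
      by (simp add: numeral_2_eq_2)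
    ultimately show ?thesis by simp
  qed
  obtain c :: 'a where c2: "c^(q^2) = c" and cq: "c^q \<noteq> c"
  proof -
    have "\<not> range S \<subseteq> {x. x^q = x}"
    proof
      assume "range S \<subseteq> {x. x^q = x}"
      then have "card (range S) \<le> card {x::'a. x^q = x}" by (intro card_mono) simp_all
      then have "card (range S) \<le> q" using cFq by linarith
      moreover have "q < q^2" using q2 by (simp add: power2_eq_square)
      ultimately show False using cS by simp
    qed
    then obtain y where "(S y)^q \<noteq> S y" by auto
    then show ?thesis by (intro that[of "S y"]) (simp_all add: Sfix)
  qed
  define P where "P y = (S y)^q - S y" for y
  have sub1: "(v - w)^q = v^q - w^q" for v w :: 'a using frob_pow_diff[OF add, of v w 1] by simp
  have Padd: "P (x + y) = P x + P y" for x y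
    unfolding P_def Sadd add by (simp add: algebra_simps)
  have Ppoly: "P y = (\<Sum>j<4*k. (if even j then -1 else 1) * y^(q^j))" for y
    unfolding P_def Sq unfolding sum_4k S_def by (simp add: sum_subtractf[symmetric] algebra_simps)
  have kerP: "card {y. P y = 0} \<le> q^(4*k-1)"
  proof -
    have "card {y. (\<Sum>j<4*k. (if even j then -1 else 1) * y^(q^j)) = (0::'a)} \<le> q^(4*k-1)"
    proof (rule root_bound[OF q2])
      show "4*k-1 < 4*k" using assms(2) by simp
      have "4*k-1 = 2*(2*k-1) + 1" using assms(2) by presburger
      then show "(if even (4*k-1) then -1 else 1) \<noteq> (0::'a)" by simp
      show "\<forall>j. 4*k-1 < j \<and> j < 4*k \<longrightarrow> (if even j then -1 else 1) = (0::'a)" by auto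
    qed
    then show ?thesis unfolding Ppoly .
  qed
  define T0 where "T0 = {w::'a. w^q + w = 0}"
  have cT0: "card T0 \<le> q"
  proof -
    have "card {x. (\<Sum>j<2. 1 * x^(q^j)) = (0::'a)} \<le> q^1"
      by (rule root_bound[OF q2]) auto
    moreover have "(\<Sum>j<2. 1 * x^(q^j)) = x^q + x" for x :: 'a
      by (simp add: numeral_2_eq_2)
    ultimately show ?thesis by (simp add: T0_def)
  qed
  have PT0: "range P \<subseteq> T0"
  proof
    fix w assume "w \<in> range P"
    then obtain y where "w = P y" by auto
    have "(P y)^q + P y = 0" unfolding P_def sub1 eq_q Sfix by simp
    then show "w \<in> T0" unfolding T0_def using \<open>w = P y\<close> by simp
  qed
  have cP: "q \<le> card (range P)"
  proof -
    have "q^(4*k) \<le> card (range P) * card {y. P y = 0}"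
      using count_additive[of P] Padd cardU by simp
    also have "\<dots> \<le> card (range P) * q^(4*k-1)" using kerP by simp
    finally have h1: "q^(4*k) \<le> card (range P) * q^(4*k-1)" .
    moreover have "q^(4*k) = q * q^(4*k-1)"
    proof -
      have "4*k = Suc (4*k-1)" using assms(2) by simp
      then show ?thesis by (metis power_Suc)
    qed
    ultimately have "q * q^(4*k-1) \<le> card (range P) * q^(4*k-1)" by simp
    then show ?thesis using qpos mult_le_cancel2[of q "q^(4*k-1)" "card (range P)"] by simp
  qed
  have PT: "range P = T0"
    by (rule card_seteq) (use PT0 cT0 cP in auto)
  have dir2: "\<not> inj F" if tr: "s + s^q = a"
  proof
    assume inj: "inj F"
    define e where "e = c^q - c"
    have e0: "e \<noteq> 0" using cq e_def by simp
    have eq: "e^q = -e" unfolding e_def sub1 eq_q c2 by simp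
    have cqe: "c^q = c + e" by (simp add: e_def)
    define R where "R = -(K*e + a*c/e)"
    have "R^q = (0 - (K*e + a*c/e))^q" by (simp add: R_def)
    also have "\<dots> = - ((K^q * e^q) + a^q * c^q / e^q)"
      unfolding sub1 add using qpos by (simp add: power_mult_distrib power_divide power_0_left)
    also have "\<dots> = K*e + a*(c+e)/e" by (simp add: K_def Kq aq eq cqe)
    finally have Rq: "R^q = K*e + a*(c+e)/e" .
    have RR: "R^q + R = a" unfolding Rq unfolding R_def using e0 by (simp add: field_simps)
    define v where "v = R - s"
    have "v^q + v = (R^q + R) - (s + s^q)" unfolding v_def sub1 by (simp add: algebra_simps)
    then have "v \<in> T0" unfolding T0_def using RR tr by simp
    then have "v \<in> range P" using PT by simp
    then obtain y where Py: "P y = v" by auto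
    have "F (y + c) = F y + e * (P y + s) + K * e^2 + a * c"
      using coll[OF c2, of y] unfolding P_def e_def by simp
    also have "P y + s = R" using Py v_def by simp
    also have "F y + e * R + K * e^2 + a * c = F y + (e * R + K * e^2 + a * c)" by (simp add: add.assoc)
    also have "e * R + K * e^2 + a * c = 0" unfolding R_def using e0
      by (simp add: field_simps power2_eq_square)
    finally have "F (y + c) = F y" by (simp add: add.assoc)
    then have "y + c = y" using inj by (simp add: inj_eq)
    then have "c = 0" by simp
    then show False using cq qpos by (simp add: power_0_left)
  qed
  have hF: "(\<lambda>x. g_poly q k (x ^ q - x + \<delta>) + a * x) = F" by (simp add: F_def fun_eq_iff)
  show ?thesis unfolding hF bijF trace using dir1 dir2 by blast
qed
end
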